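(* Let $0\le q\in L_1^{loc}(\mathbb{R})$ and assume there is $a\in(0,\infty)$ with $\inf_{x\in\mathbb{R}}\int_{x-a}^{x+a}q(t)\,dt>0$. Suppose there exist $\alpha\ge1$, $\beta>0$, $X>0$ such that for all $|x|\ge X$, $\frac1\alpha\le\frac{d(t)}{d(x)}\le\alpha$ whenever $|t-x|\le\beta$. Then for each $s\in(0,\infty)$ there is $c(s)\in(0,\infty)$ such that $$J_s(x):=\int_x^\infty\exp\Big(-s\int_x^t q(\xi)\,d\xi\Big)dt\le c(s)\,d(x),\quad x\in\mathbb{R}.$$
   Context: $d(x)=\inf\{d>0:\int_{x-d}^{x+d}q(t)\,dt=2\}$ for $x\in\mathbb{R}$. *)

theory Defs
  imports "HOL-Analysis.Analysis"
begin

definition dfun :: "(real \<Rightarrow> real) \<Rightarrow> real \<Rightarrow> real" where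
  "dfun q x = Inf {d. d > 0 \<and> (LINT t:{x-d..x+d}|lborel. q t) = 2}"

end

theory Submission
  imports Defs "HOL-Probability.Distributions"
begin

lemma exp_nn:
  fixes x l A :: real
  assumes l: "l > 0" and A: "A \<ge> 0"
  shows "(\<integral>\<^sup>+t\<in>{x..}. ennreal (A * exp (- l * (t - x))) \<partial>lborel) = ennreal (A / l)"
proof -
  have "(\<integral>\<^sup>+t\<in>{x..}. ennreal (A * exp (- l * (t - x))) \<partial>lborel)
     = \<bar>1/l\<bar> * (\<integral>\<^sup>+u. ennreal (A * exp (- l * ((x + (1/l) * u) - x))) * indicator {x..} (x + (1/l) * u) \<partial>lborel)"
    by (rule nn_integral_real_affine) (use l in auto)
  also have "(\<lambda>u. ennreal (A * exp (- l * ((x + (1/l) * u) - x))) * indicator {x..} (x + (1/l) * u))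
      = (\<lambda>u. ennreal A * (ennreal (u^0 * exp (- u)) * indicator {0..} u))"
    using l A by (auto simp: fun_eq_iff ennreal_mult zero_le_divide_iff split: split_indicator)
  also have "(\<integral>\<^sup>+u. ennreal A * (ennreal (u^0 * exp (- u)) * indicator {0..} u) \<partial>lborel) = ennreal A * 1"
    using nn_intergal_power_times_exp_Ici[of 0] by (subst nn_integral_cmult) auto
  finally show ?thesis using l A by (simp add: ennreal_mult[symmetric] divide_simps mult.commute)
qed

lemma H_comb:
  fixes q :: "real \<Rightarrow> real"
  assumes int: "\<And>a b. q integrable_on {a..b}" and "a \<le> c" "c \<le> b"
  shows "integral {a..c} q + integral {c..b} q = integral {a..b} q"
  using Henstock_Kurzweil_Integration.integral_combine[OF assms(2,3) int] by simp

lemma H_mono: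
  fixes q :: "real \<Rightarrow> real"
  assumes int: "\<And>a b. q integrable_on {a..b}" and nn: "\<And>t. 0 \<le> q t"
    and "a' \<le> a" "b \<le> b'"
  shows "integral {a..b} q \<le> integral {a'..b'} q"
  by (rule integral_subset_le) (use assms in auto)

lemma H_nonneg:
  fixes q :: "real \<Rightarrow> real"
  assumes int: "\<And>a b. q integrable_on {a..b}" and nn: "\<And>t. 0 \<le> q t"
  shows "0 \<le> integral {a..b} q"
  by (rule integral_nonneg) (use assms in auto)

lemma H_chain:
  fixes q :: "real \<Rightarrow> real"
  assumes int: "\<And>a b. q integrable_on {a..b}" and w: "w > 0"
    and win: "\<And>y. x0 \<le> y \<Longrightarrow> y + w \<le> x0 + U \<Longrightarrow> \<mu> \<le> integral {y..y+w} q"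
  shows "real k * w \<le> U \<Longrightarrow> real k * \<mu> \<le> integral {x0..x0 + real k * w} q"
proof (induction k)
  case 0
  then show ?case by simp
next
  case (Suc k)
  have k: "real k * w \<le> U" using Suc.prems w by (simp add: algebra_simps)
  have "integral {x0..x0 + real k * w} q + integral {x0 + real k * w..x0 + real k * w + w} q
        = integral {x0..x0 + real k * w + w} q"
    by (rule H_comb[OF int]) (use w in auto)
  moreover have "\<mu> \<le> integral {x0 + real k * w..x0 + real k * w + w} q"
    by (rule win) (use w Suc.prems in \<open>auto simp: algebra_simps\<close>)
  ultimately show ?case using Suc.IH[OF k] by (simp add: algebra_simps)
qed

lemma H_floor:
  fixes q :: "real \<Rightarrow> real"
  assumes int: "\<And>a b. q integrable_on {a..b}" and nn: "\<And>t. 0 \<le> q t" and w: "w > 0"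
    and mu: "\<mu> \<ge> 0"
    and win: "\<And>y. x0 \<le> y \<Longrightarrow> y + w \<le> x0 + U \<Longrightarrow> \<mu> \<le> integral {y..y+w} q"
    and u: "0 \<le> u" "u \<le> U"
  shows "\<mu> * (u / w - 1) \<le> integral {x0..x0 + u} q"
proof -
  define k where "k = nat (floor (u / w))"
  have k1: "real k \<le> u / w" unfolding k_def using u w by simp
  have k2: "u / w - 1 \<le> real k" unfolding k_def using u w by linarith
  have kw: "real k * w \<le> u" using k1 w by (simp add: field_simps)
  have "\<mu> * (u / w - 1) \<le> real k * \<mu>" using k2 mu by (simp add: mult_left_mono mult.commute)
  also have "\<dots> \<le> integral {x0..x0 + real k * w} q"
    by (rule H_chain[OF int w win]) (use kw u in auto)
  also have "\<dots> \<le> integral {x0..x0 + u} q"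
    by (rule H_mono[OF int nn]) (use kw in auto)
  finally show ?thesis .
qed

lemma H_small:
  fixes q :: "real \<Rightarrow> real"
  assumes int: "\<And>a b. q integrable_on {a..b}"
  shows "\<exists>\<delta>>0. \<forall>x h. \<bar>x\<bar> \<le> R \<longrightarrow> 0 \<le> h \<longrightarrow> h \<le> \<delta> \<longrightarrow> integral {x-h..x+h} q < 2"
proof -
  define I where "I t = integral {-R-1..t} q" for t
  have "continuous_on {-R-1..R+1} I" unfolding I_def by (rule indefinite_integral_continuous_1[OF int])
  then have "uniformly_continuous_on {-R-1..R+1} I" by (rule compact_uniformly_continuous) simp
  then obtain d where d: "d > 0" and dd: "\<And>t t'. t \<in> {-R-1..R+1} \<Longrightarrow> t' \<in> {-R-1..R+1} \<Longrightarrow> dist t' t < d \<Longrightarrow> dist (I t') (I t) < 2"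
    unfolding uniformly_continuous_on_def by (metis zero_less_numeral)
  show ?thesis
  proof (intro exI[of _ "min 1 (d/3)"] conjI allI impI)
    show "0 < min 1 (d/3)" using d by simp
    fix x h assume x: "\<bar>x\<bar> \<le> R" and h: "0 \<le> h" "h \<le> min 1 (d/3)"
    have "integral {-R-1..x-h} q + integral {x-h..x+h} q = integral {-R-1..x+h} q"
      by (rule H_comb[OF int]) (use x h in auto)
    then have eq: "integral {x-h..x+h} q = I (x+h) - I (x-h)" unfolding I_def by simp
    have "dist (I (x+h)) (I (x-h)) < 2"
      by (rule dd) (use x h d in \<open>auto simp: dist_real_def\<close>)
    then show "integral {x-h..x+h} q < 2" using eq by (simp add: dist_real_def)
  qed
qed

lemma H_exists:
  fixes q :: "real \<Rightarrow> real"
  assumes int: "\<And>a b. q integrable_on {a..b}" and nn: "\<And>t. 0 \<le> q t"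
    and m: "m > 0" and a0: "a0 > 0" and win: "\<And>y. m \<le> integral {y-a0..y+a0} q"
  shows "\<exists>h>0. integral {x-h..x+h} q = 2"
proof -
  define N where "N = real (nat (ceiling (2/m)) + 1)"
  have N1: "2/m \<le> N - 1" unfolding N_def by linarith
  have N0: "N \<ge> 1" unfolding N_def by simp
  have "m * ((2*N*a0) / (2*a0) - 1) \<le> integral {(x - N*a0)..(x - N*a0) + 2*N*a0} q"
  proof (rule H_floor[OF int nn, where U="2*N*a0"])
    fix y assume "x - N*a0 \<le> y"
    show "m \<le> integral {y..y + 2 * a0} q" using win[of "y+a0"] by (simp add: algebra_simps)
  qed (use a0 m N0 in auto)
  moreover have "m * ((2*N*a0) / (2*a0) - 1) = m * (N - 1)" using a0 by simp
  moreover have "2 \<le> m * (N - 1)" using N1 m by (simp add: field_simps)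
  moreover have "(x - N*a0) + 2*N*a0 = x + N*a0" by simp
  ultimately have big: "2 \<le> integral {x - N*a0..x + N*a0} q" by (metis order_trans)
  define I where "I t = integral {x - N*a0..t} q" for t
  define f where "f h = I (x+h) - I (x-h)" for h
  have cI: "continuous_on {x - N*a0..x + N*a0} I" unfolding I_def by (rule indefinite_integral_continuous_1[OF int])
  have c1: "continuous_on {0..N*a0} (\<lambda>h. I (x+h))"
    by (rule continuous_on_compose2[OF cI]) (auto intro!: continuous_intros)
  have c2: "continuous_on {0..N*a0} (\<lambda>h. I (x-h))"
    by (rule continuous_on_compose2[OF cI]) (auto intro!: continuous_intros)
  have cf: "continuous_on {0..N*a0} f" unfolding f_def by (intro continuous_on_diff c1 c2)
  have feq: "f h = integral {x-h..x+h} q" if "0 \<le> h" "h \<le> N*a0" for h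
  proof -
    have "integral {x - N*a0..x-h} q + integral {x-h..x+h} q = integral {x - N*a0..x+h} q"
      by (rule H_comb[OF int]) (use that in auto)
    then show ?thesis unfolding f_def I_def by simp
  qed
  have "\<exists>h\<ge>0. h \<le> N*a0 \<and> f h = 2"
    by (rule IVT') (use feq[of 0] feq[of "N*a0"] big N0 a0 cf in auto)
  then obtain h where h: "0 \<le> h" "h \<le> N*a0" "f h = 2" by blast
  have "h \<noteq> 0" using h unfolding f_def by auto
  then show ?thesis using h feq by (intro exI[of _ h]) auto
qed

definition Dq :: "(real \<Rightarrow> real) \<Rightarrow> real \<Rightarrow> real" where
  "Dq q x = Inf {d. d > 0 \<and> integral {x-d..x+d} q = 2}"

lemma dfun_Dq:
  fixes q :: "real \<Rightarrow> real"
  assumes locint: "\<And>a b. set_integrable lborel {a..b} q"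
  shows "dfun q x = Dq q x"
  unfolding dfun_def Dq_def using set_borel_integral_eq_integral(2)[OF locint] by simp

lemma Dq_lower:
  fixes q :: "real \<Rightarrow> real"
  assumes ne: "\<exists>h>0. integral {x-h..x+h} q = 2" and d: "\<delta> > 0"
    and small: "\<And>h. 0 \<le> h \<Longrightarrow> h \<le> \<delta> \<Longrightarrow> integral {x-h..x+h} q < 2"
  shows "\<delta> \<le> Dq q x"
  unfolding Dq_def
proof (rule cInf_greatest)
  show "{d. 0 < d \<and> integral {x - d..x + d} q = 2} \<noteq> {}" using ne by auto
  fix h assume "h \<in> {d. 0 < d \<and> integral {x - d..x + d} q = 2}"
  then show "\<delta> \<le> h" using small[of h] by force
qed

lemma Dq_upper:
  fixes q :: "real \<Rightarrow> real"
  assumes int: "\<And>a b. q integrable_on {a..b}" and nn: "\<And>t. 0 \<le> q t"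
    and ne: "\<exists>h>0. integral {x-h..x+h} q = 2" and h: "Dq q x < h"
  shows "2 \<le> integral {x-h..x+h} q"
proof -
  let ?S = "{d. 0 < d \<and> integral {x - d..x + d} q = 2}"
  have "?S \<noteq> {}" using ne by auto
  then obtain h' where "h' \<in> ?S" "h' < h" using cInf_lessD[of ?S h] h unfolding Dq_def by blast
  then have "integral {x-h'..x+h'} q = 2" "h' < h" by auto
  moreover have "integral {x-h'..x+h'} q \<le> integral {x-h..x+h} q"
    by (rule H_mono[OF int nn]) (use \<open>h' < h\<close> in auto)
  ultimately show ?thesis by simp
qed

lemma exp_neg_le_inv:
  fixes y :: real assumes "y > 0" shows "exp (- y) \<le> 1 / y"
proof -
  have "y \<le> exp y" using exp_ge_add_one_self[of y] by linarith
  then show ?thesis using assms by (simp add: exp_minus field_simps)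
qed

theorem lemma4p4:
  fixes q :: "real \<Rightarrow> real"
  assumes nonneg: "\<And>t. 0 \<le> q t"
    and locint: "\<And>a b. set_integrable lborel {a..b} q"
    and inf_pos: "\<exists>a>0. (INF x. LINT t:{x-a..x+a}|lborel. q t) > 0"
    and ratio: "\<exists>\<alpha>\<ge>1. \<exists>\<beta>>0. \<exists>X>0. \<forall>x t. \<bar>x\<bar> \<ge> X \<and> \<bar>t - x\<bar> \<le> \<beta> \<longrightarrow>
                  1/\<alpha> \<le> dfun q t / dfun q x \<and> dfun q t / dfun q x \<le> \<alpha>"
  shows "\<forall>s>0. \<exists>c>0. \<forall>x.
           (\<integral>\<^sup>+ t\<in>{x..}. ennreal (exp (- s * (LINT \<xi>:{x..t}|lborel. q \<xi>))) \<partial>lborel)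
             \<le> ennreal (c * dfun q x)"
proof -
  have int: "\<And>a b. q integrable_on {a..b}" using set_borel_integral_eq_integral(1)[OF locint] .
  have LI: "\<And>a b. (LINT t:{a..b}|lborel. q t) = integral {a..b} q"
    using set_borel_integral_eq_integral(2)[OF locint] .
  obtain a0 where a0: "a0 > 0" and ipos: "(INF x. LINT t:{x-a0..x+a0}|lborel. q t) > 0"
    using inf_pos by blast
  define m where "m = (INF x. integral {x-a0..x+a0} q)"
  have mpos: "m > 0" using ipos unfolding m_def LI .
  have win: "\<And>y. m \<le> integral {y-a0..y+a0} q"
    unfolding m_def
    by (rule cINF_lower) (auto intro!: bdd_belowI[of _ 0] H_nonneg[OF int nonneg])
  obtain \<alpha> \<beta> X where al: "\<alpha> \<ge> 1" and be: "\<beta> > 0" and X: "X > 0"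
    and rat: "\<And>x t. \<bar>x\<bar> \<ge> X \<Longrightarrow> \<bar>t - x\<bar> \<le> \<beta> \<Longrightarrow> dfun q t / dfun q x \<le> \<alpha>"
    using ratio by blast
  have ne: "\<And>x. \<exists>h>0. integral {x-h..x+h} q = 2"
    by (rule H_exists[OF int nonneg mpos a0 win])
  have Dpos: "0 < Dq q x" for x
  proof -
    obtain \<delta> where "\<delta> > 0" and "\<forall>x' h. \<bar>x'\<bar> \<le> \<bar>x\<bar> \<longrightarrow> 0 \<le> h \<longrightarrow> h \<le> \<delta> \<longrightarrow> integral {x'-h..x'+h} q < 2"
      using H_small[OF int, of "\<bar>x\<bar>"] by blast
    then have "\<delta> \<le> Dq q x" by (intro Dq_lower[OF ne]) auto
    with \<open>\<delta> > 0\<close> show ?thesis by simp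
  qed
  obtain \<delta>X where dX: "\<delta>X > 0" and dXs: "\<forall>x' h. \<bar>x'\<bar> \<le> X \<longrightarrow> 0 \<le> h \<longrightarrow> h \<le> \<delta>X \<longrightarrow> integral {x'-h..x'+h} q < 2"
    using H_small[OF int, of X] by blast
  have DX: "\<delta>X \<le> Dq q x" if "\<bar>x\<bar> \<le> X" for x
    by (rule Dq_lower[OF ne dX]) (use dXs that in auto)
  have FB: "m * (u / (2*a0) - 1) \<le> integral {x0..x0+u} q" if "0 \<le> u" for x0 u
  proof (rule H_floor[OF int nonneg _ _ _ that order_refl])
    fix y show "m \<le> integral {y..y + 2 * a0} q" using win[of "y+a0"] by (simp add: algebra_simps)
  qed (use a0 mpos in auto)
  show ?thesis
  proof (intro allI impI)
    fix s :: real assume s: "s > 0"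
    define C0 where "C0 = exp (s*m) * (2*a0) / (s*m)"
    define K where "K = exp (s*(2 + m + m*\<beta>/(2*a0)))"
    define c1 where "c1 = 4 * \<alpha> * (exp (2 * s) / (2 * s) + K * a0 / (s^2 * m * \<beta>))"
    define c where "c = C0/\<delta>X + c1"
    have C0pos: "C0 > 0" unfolding C0_def using s mpos a0 by simp
    have c1pos: "c1 > 0" unfolding c1_def K_def using s mpos a0 al be by (intro mult_pos_pos add_pos_pos) auto
    show "\<exists>c>0. \<forall>x. (\<integral>\<^sup>+ t\<in>{x..}. ennreal (exp (- s * (LINT \<xi>:{x..t}|lborel. q \<xi>))) \<partial>lborel)
             \<le> ennreal (c * dfun q x)"
    proof (intro exI[of _ c] conjI allI)
      show "c > 0" unfolding c_def using C0pos dX c1pos by (metis add_pos_pos divide_pos_pos)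
      fix x
      define d where "d = Dq q x"
      have dpos: "d > 0" unfolding d_def by (rule Dpos)
      have dfx: "dfun q x = d" unfolding d_def by (rule dfun_Dq[OF locint])
      have g: "(LINT \<xi>:{x..t}|lborel. q \<xi>) = integral {x..t} q" for t using LI .
      show "(\<integral>\<^sup>+ t\<in>{x..}. ennreal (exp (- s * (LINT \<xi>:{x..t}|lborel. q \<xi>))) \<partial>lborel)
             \<le> ennreal (c * dfun q x)"
      proof (cases "\<bar>x\<bar> < X")
        case True
        have pw: "exp (- s * integral {x..t} q) \<le> exp (s*m) * exp (- (s*m/(2*a0)) * (t - x))" if "x \<le> t" for t
        proof -
          have "m * ((t-x) / (2*a0) - 1) \<le> integral {x..x+(t-x)} q" by (rule FB) (use that in auto)
          then have "m * ((t-x) / (2*a0) - 1) \<le> integral {x..t} q" by simp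
          then have "- s * integral {x..t} q \<le> - s * (m * ((t-x) / (2*a0) - 1))"
            using s by (intro mult_left_mono_neg) auto
          also have "\<dots> = s*m - (s*m/(2*a0)) * (t - x)" using a0 by (simp add: field_simps)
          finally have "- s * integral {x..t} q \<le> s*m - (s*m/(2*a0)) * (t - x)" .
          then show ?thesis by (simp add: exp_add[symmetric])
        qed
        have "(\<integral>\<^sup>+ t\<in>{x..}. ennreal (exp (- s * (LINT \<xi>:{x..t}|lborel. q \<xi>))) \<partial>lborel)
            \<le> (\<integral>\<^sup>+ t\<in>{x..}. ennreal (exp (s*m) * exp (- (s*m/(2*a0)) * (t - x))) \<partial>lborel)"
        proof (rule nn_integral_mono)
          fix t show "ennreal (exp (- s * (LINT \<xi>:{x..t}|lborel. q \<xi>))) * indicator {x..} t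
              \<le> ennreal (exp (s*m) * exp (- (s*m/(2*a0)) * (t - x))) * indicator {x..} t"
          proof (cases "x \<le> t")
            case True
            have calc: "ennreal (exp (- s * integral {x..t} q)) \<le> ennreal (exp (s*m) * exp (- (s*m/(2*a0)) * (t - x)))"
              by (rule ennreal_leI) (rule pw[OF True])
            have ind: "indicator {x..} t = (1::ennreal)" using True by simp
            show ?thesis unfolding g ind mult_1_right using calc .
          next
            case False
            then show ?thesis by simp
          qed
        qed
        also have "\<dots> = ennreal (exp (s*m) / (s*m/(2*a0)))"
          by (rule exp_nn) (use s mpos a0 in auto)
        also have "exp (s*m) / (s*m/(2*a0)) = C0" unfolding C0_def by simp
        also have "C0 \<le> c * dfun q x"
        proof -
          have "C0 = (C0/\<delta>X) * \<delta>X" using dX by simp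
          also have "\<dots> \<le> (C0/\<delta>X) * d" using DX[of x] True C0pos dX unfolding d_def by (intro mult_left_mono) auto
          also have "\<dots> \<le> c * d" unfolding c_def using c1pos dpos by (simp add: algebra_simps)
          finally show ?thesis using dfx by simp
        qed
        finally show ?thesis by (simp add: ennreal_leI)
      next
        case False
        then have xX: "X \<le> \<bar>x\<bar>" by simp
        define w where "w = 4*\<alpha>*d"
        have wpos: "w > 0" unfolding w_def using al dpos by simp
        have NB: "2 * (u / w - 1) \<le> integral {x..x+u} q" if "0 \<le> u" "u \<le> \<beta>" for u
        proof (rule H_floor[OF int nonneg wpos _ _ that])
          fix y assume y: "x \<le> y" "y + w \<le> x + \<beta>"
          define z where "z = y + w/2"
          have "\<bar>z - x\<bar> \<le> \<beta>" unfolding z_def using y wpos by auto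
          then have "dfun q z / dfun q x \<le> \<alpha>" using rat xX by blast
          then have "Dq q z / d \<le> \<alpha>" using dfun_Dq[OF locint] dfx by simp
          then have "Dq q z \<le> \<alpha> * d" using dpos by (simp add: field_simps)
          also have "\<dots> < w/2" unfolding w_def using dpos al by simp
          finally have "2 \<le> integral {z - w/2..z + w/2} q" by (intro Dq_upper[OF int nonneg ne])
          then show "2 \<le> integral {y..y + w} q" unfolding z_def by (simp add: algebra_simps)
        qed simp
        define A1 where "A1 = exp (2 * s)"
        define l1 where "l1 = 2 * s/w"
        define A2 where "A2 = exp (- s*(2*\<beta>/w - 2 - m - m*\<beta>/(2*a0)))"
        define l2 where "l2 = s*m/(2*a0)"
        have pw: "exp (- s * integral {x..t} q) \<le> A1 * exp (- l1 * (t - x)) + A2 * exp (- l2 * (t - x))"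
          if "x \<le> t" for t
        proof (cases "t - x \<le> \<beta>")
          case True
          have "2 * ((t-x) / w - 1) \<le> integral {x..x+(t-x)} q" by (rule NB) (use that True in auto)
          then have "2 * ((t-x) / w - 1) \<le> integral {x..t} q" by simp
          then have "- s * integral {x..t} q \<le> - s * (2 * ((t-x) / w - 1))"
            using s by (intro mult_left_mono_neg) auto
          also have "\<dots> = 2 * s - l1 * (t - x)" unfolding l1_def using wpos by (simp add: field_simps)
          finally have "- s * integral {x..t} q \<le> 2 * s - l1 * (t - x)" .
          then have "exp (- s * integral {x..t} q) \<le> A1 * exp (- l1 * (t - x))"
            unfolding A1_def by (simp add: exp_add[symmetric])
          moreover have "0 \<le> A2 * exp (- l2 * (t - x))" unfolding A2_def by simp
          ultimately show ?thesis by linarith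
        next
          case False
          have i1: "2 * (\<beta> / w - 1) \<le> integral {x..x+\<beta>} q" by (rule NB) (use be in auto)
          have i2: "m * ((t - (x+\<beta>)) / (2*a0) - 1) \<le> integral {x+\<beta>..x+\<beta>+(t-(x+\<beta>))} q"
            by (rule FB) (use False in auto)
          have sp: "integral {x..x+\<beta>} q + integral {x+\<beta>..t} q = integral {x..t} q"
            by (rule H_comb[OF int]) (use False be in auto)
          have "2 * (\<beta> / w - 1) + m * ((t - (x+\<beta>)) / (2*a0) - 1) \<le> integral {x..t} q"
            using i1 i2 sp by simp
          then have "- s * integral {x..t} q \<le> - s * (2 * (\<beta> / w - 1) + m * ((t - (x+\<beta>)) / (2*a0) - 1))"
            using s by (intro mult_left_mono_neg) auto
          also have "\<dots> = - s*(2*\<beta>/w - 2 - m - m*\<beta>/(2*a0)) - l2 * (t - x)"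
            unfolding l2_def using a0 wpos by (simp add: field_simps)
          finally have "- s * integral {x..t} q \<le> - s*(2*\<beta>/w - 2 - m - m*\<beta>/(2*a0)) - l2 * (t - x)" .
          then have "exp (- s * integral {x..t} q) \<le> A2 * exp (- l2 * (t - x))"
            unfolding A2_def by (simp add: exp_add[symmetric])
          moreover have "0 \<le> A1 * exp (- l1 * (t - x))" unfolding A1_def by simp
          ultimately show ?thesis by linarith
        qed
        have l1pos: "l1 > 0" unfolding l1_def using s wpos by simp
        have l2pos: "l2 > 0" unfolding l2_def using s mpos a0 by simp
        have "(\<integral>\<^sup>+ t\<in>{x..}. ennreal (exp (- s * (LINT \<xi>:{x..t}|lborel. q \<xi>))) \<partial>lborel)
            \<le> (\<integral>\<^sup>+ t. ennreal (A1 * exp (- l1 * (t - x))) * indicator {x..} t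
                   + ennreal (A2 * exp (- l2 * (t - x))) * indicator {x..} t \<partial>lborel)"
        proof (rule nn_integral_mono)
          fix t show "ennreal (exp (- s * (LINT \<xi>:{x..t}|lborel. q \<xi>))) * indicator {x..} t
              \<le> ennreal (A1 * exp (- l1 * (t - x))) * indicator {x..} t
                   + ennreal (A2 * exp (- l2 * (t - x))) * indicator {x..} t"
          proof (cases "x \<le> t")
            case True
            have "ennreal (exp (- s * integral {x..t} q)) \<le> ennreal (A1 * exp (- l1 * (t - x)) + A2 * exp (- l2 * (t - x)))"
              by (rule ennreal_leI) (rule pw[OF True])
            also have "\<dots> = ennreal (A1 * exp (- l1 * (t - x))) + ennreal (A2 * exp (- l2 * (t - x)))"
              by (rule ennreal_plus) (simp_all add: A1_def A2_def)
            finally have calc: "ennreal (exp (- s * integral {x..t} q)) \<le> ennreal (A1 * exp (- l1 * (t - x))) + ennreal (A2 * exp (- l2 * (t - x)))" .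
            have ind: "indicator {x..} t = (1::ennreal)" using True by simp
            show ?thesis unfolding g ind mult_1_right using calc .
          next
            case False
            then show ?thesis by simp
          qed
        qed
        also have "\<dots> = (\<integral>\<^sup>+ t\<in>{x..}. ennreal (A1 * exp (- l1 * (t - x))) \<partial>lborel)
                     + (\<integral>\<^sup>+ t\<in>{x..}. ennreal (A2 * exp (- l2 * (t - x))) \<partial>lborel)"
          by (rule nn_integral_add) auto
        also have "\<dots> = ennreal (A1 / l1) + ennreal (A2 / l2)"
          using exp_nn[OF l1pos, of A1 x] exp_nn[OF l2pos, of A2 x] unfolding A1_def A2_def by simp
        also have "\<dots> = ennreal (A1 / l1 + A2 / l2)"
          using l1pos l2pos unfolding A1_def A2_def by (simp add: ennreal_plus)
        also have "A1 / l1 + A2 / l2 \<le> c * dfun q x"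
        proof -
          have e1: "A1 / l1 = w * (exp (2 * s)/(2 * s))" unfolding A1_def l1_def using wpos s by simp
          have A2eq: "A2 = K * exp (- (2 * s*\<beta>/w))" unfolding A2_def K_def
            by (simp add: exp_add[symmetric] algebra_simps)
          have ex: "exp (- (2 * s*\<beta>/w)) \<le> w / (2 * s*\<beta>)"
            using exp_neg_le_inv[of "2 * s*\<beta>/w"] s be wpos by simp
          have "A2 / l2 = K * exp (- (2 * s*\<beta>/w)) * (2*a0/(s*m))" unfolding A2eq l2_def by simp
          also have "\<dots> \<le> K * (w / (2 * s*\<beta>)) * (2*a0/(s*m))"
            using ex s mpos a0 unfolding K_def by (intro mult_right_mono mult_left_mono) auto
          also have "\<dots> = w * (K*a0/(s^2*m*\<beta>))" using s be mpos by (simp add: field_simps power2_eq_square)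
          finally have e2: "A2 / l2 \<le> w * (K*a0/(s^2*m*\<beta>))" .
          have "A1 / l1 + A2 / l2 \<le> w * (exp (2 * s)/(2 * s) + K*a0/(s^2*m*\<beta>))"
            using e1 e2 by (simp add: algebra_simps)
          also have "\<dots> = c1 * d" unfolding c1_def w_def by simp
          also have "\<dots> \<le> c * d" unfolding c_def using C0pos dX dpos by simp
          finally show ?thesis using dfx by simp
        qed
        finally show ?thesis by (simp add: ennreal_leI)
      qed
    qed
  qed
qed

end
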